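(* Let $\Omega\subseteq\mathbb{R}^n$ be open and let $f\in\mathbb{A}(\Omega)$ be D-continuous. If there is a dense subset $D$ of $\Omega$ such that $w(f(x))=0$ for all $x\in D$, then $f$ is H-continuous.
   Context: $\overline{\mathbb{R}}=\mathbb{R}\cup\{\pm\infty\}$, $\mathbb{I}\overline{\mathbb{R}}$ is the set of closed intervals $[\underline a,\overline a]$ with $\underline a\le\overline a$ in $\overline{\mathbb{R}}$, $a\in\overline{\mathbb{R}}$ identified with $[a,a]$. The width $w(a)$ of $a=[\underline a,\overline a]$ is $\overline a-\underline a$ if both endpoints are finite, $\infty$ if $\underline a<\overline a$ and one endpoint is infinite, and $0$ if $\underline a=\overline a=\pm\infty$. $\mathbb{A}(\Omega)$ is the set of functions $\Omega\to\mathbb{I}\overline{\mathbb{R}}$. $B_\delta(x)=\{y\in\Omega:\|x-y\|<\delta\}$. For dense $D\subseteq\Omega$ and $f\in\mathbb{A}(D)$: $I(D,\Omega,f)(x)=\sup_{\delta>0}\inf\{z\in f(y):y\in B_\delta(x)\cap D\}$, $S(D,\Omega,f)(x)=\inf_{\delta>0}\sup\{z\in f(y):y\in B_\delta(x)\cap D\}$, $F(D,\Omega,f)(x)=[I(D,\Omega,f)(x),S(D,\Omega,f)(x)]$; $F(f)=F(\Omega,\Omega,f)$. $f$ is D-continuous if $F(D,\Omega,f)=f$ for every dense $D\subseteq\Omega$ (using the restriction of $f$ to $D$); H-continuous if for every $g\in\mathbb{A}(\Omega)$ with $g(x)\subseteq f(x)$ for all $x$ one has $F(g)=f$. *)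

theory Defs
  imports "HOL-Analysis.Analysis" "HOL-Library.Extended_Real"
begin

text \<open>An extended-real interval [a,b] with a \<le> b is represented by the pair (a,b).\<close>
type_synonym iv = "ereal \<times> ereal"

definition iv_mem :: "ereal \<Rightarrow> iv \<Rightarrow> bool" where
  "iv_mem z a \<longleftrightarrow> fst a \<le> z \<and> z \<le> snd a"

definition iv_subset :: "iv \<Rightarrow> iv \<Rightarrow> bool" where
  "iv_subset a b \<longleftrightarrow> (\<forall>z. iv_mem z a \<longrightarrow> iv_mem z b)"

definition iv_width :: "iv \<Rightarrow> ereal" where
  "iv_width a = (if fst a = snd a then 0
                 else if \<bar>fst a\<bar> \<noteq> \<infinity> \<and> \<bar>snd a\<bar> \<noteq> \<infinity> then snd a - fst a
                 else \<infinity>)"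

text \<open>f belongs to A(Omega): every value on Omega is a genuine interval.\<close>
definition interval_fun :: "('a \<Rightarrow> iv) \<Rightarrow> 'a set \<Rightarrow> bool" where
  "interval_fun f \<Omega> \<longleftrightarrow> (\<forall>x\<in>\<Omega>. fst (f x) \<le> snd (f x))"

definition Bdelta :: "'a::metric_space set \<Rightarrow> real \<Rightarrow> 'a \<Rightarrow> 'a set" where
  "Bdelta \<Omega> \<delta> x = {y\<in>\<Omega>. dist x y < \<delta>}"

definition Ilow :: "'a::metric_space set \<Rightarrow> 'a set \<Rightarrow> ('a \<Rightarrow> iv) \<Rightarrow> 'a \<Rightarrow> ereal" where
  "Ilow D \<Omega> f x = (SUP \<delta>\<in>{0<..}. Inf {z. \<exists>y\<in>Bdelta \<Omega> \<delta> x \<inter> D. iv_mem z (f y)})"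

definition Supp :: "'a::metric_space set \<Rightarrow> 'a set \<Rightarrow> ('a \<Rightarrow> iv) \<Rightarrow> 'a \<Rightarrow> ereal" where
  "Supp D \<Omega> f x = (INF \<delta>\<in>{0<..}. Sup {z. \<exists>y\<in>Bdelta \<Omega> \<delta> x \<inter> D. iv_mem z (f y)})"

definition Fop :: "'a::metric_space set \<Rightarrow> 'a set \<Rightarrow> ('a \<Rightarrow> iv) \<Rightarrow> 'a \<Rightarrow> iv" where
  "Fop D \<Omega> f x = (Ilow D \<Omega> f x, Supp D \<Omega> f x)"

definition dense_in :: "'a::topological_space set \<Rightarrow> 'a set \<Rightarrow> bool" where
  "dense_in D \<Omega> \<longleftrightarrow> D \<subseteq> \<Omega> \<and> \<Omega> \<subseteq> closure D"

definition D_continuous :: "'a::metric_space set \<Rightarrow> ('a \<Rightarrow> iv) \<Rightarrow> bool" where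
  "D_continuous \<Omega> f \<longleftrightarrow> (\<forall>D. dense_in D \<Omega> \<longrightarrow> (\<forall>x\<in>\<Omega>. Fop D \<Omega> f x = f x))"

definition H_continuous :: "'a::metric_space set \<Rightarrow> ('a \<Rightarrow> iv) \<Rightarrow> bool" where
  "H_continuous \<Omega> f \<longleftrightarrow> (\<forall>g. interval_fun g \<Omega> \<and> (\<forall>x\<in>\<Omega>. iv_subset (g x) (f x))
      \<longrightarrow> (\<forall>x\<in>\<Omega>. Fop \<Omega> \<Omega> g x = f x))"

end

theory Submission
  imports Defs
begin

theorem theorem4:
  fixes \<Omega> :: "(real ^ 'n) set" and f :: "real ^ 'n \<Rightarrow> iv"
  assumes "open \<Omega>"
    and "interval_fun f \<Omega>"
    and "D_continuous \<Omega> f"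
    and "\<exists>D. dense_in D \<Omega> \<and> (\<forall>x\<in>D. iv_width (f x) = 0)"
  shows "H_continuous \<Omega> f"
proof -
  obtain D0 where D0: "dense_in D0 \<Omega>" and w: "\<And>x. x\<in>D0 \<Longrightarrow> iv_width (f x) = 0"
    using assms(4) by blast
  have deg: "fst (f x) = snd (f x)" if "x \<in> D0" for x
    using w[OF that] unfolding iv_width_def
    by (cases "fst (f x)"; cases "snd (f x)") (auto split: if_splits)
  have DO: "dense_in \<Omega> \<Omega>" unfolding dense_in_def using closure_subset by blast
  have fO: "Fop \<Omega> \<Omega> f x = f x" if "x\<in>\<Omega>" for x
    using assms(3) DO that unfolding D_continuous_def by simp
  have fD: "Fop D0 \<Omega> f x = f x" if "x\<in>\<Omega>" for x
    using assms(3) D0 that unfolding D_continuous_def by simp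
  have D0O: "D0 \<subseteq> \<Omega>" using D0 unfolding dense_in_def by blast
  show ?thesis unfolding H_continuous_def
  proof (intro allI impI ballI)
    fix g x assume g: "interval_fun g \<Omega> \<and> (\<forall>x\<in>\<Omega>. iv_subset (g x) (f x))" and x: "x \<in> \<Omega>"
    have gs: "fst (f y) \<le> fst (g y) \<and> snd (g y) \<le> snd (f y)" if "y \<in> \<Omega>" for y
    proof -
      have "fst (g y) \<le> snd (g y)" using g that unfolding interval_fun_def by blast
      moreover have "iv_subset (g y) (f y)" using g that by blast
      ultimately have "iv_mem (fst (g y)) (f y)" "iv_mem (snd (g y)) (f y)"
        unfolding iv_subset_def iv_mem_def by simp_all
      then show ?thesis unfolding iv_mem_def by simp
    qed
    define SF where "SF = (\<lambda>\<delta>. {z. \<exists>y\<in>Bdelta \<Omega> \<delta> x \<inter> \<Omega>. iv_mem z (f y)})"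
    define SG where "SG = (\<lambda>\<delta>. {z. \<exists>y\<in>Bdelta \<Omega> \<delta> x \<inter> \<Omega>. iv_mem z (g y)})"
    define SD where "SD = (\<lambda>\<delta>. {z. \<exists>y\<in>Bdelta \<Omega> \<delta> x \<inter> D0. iv_mem z (f y)})"
    have s1: "SG \<delta> \<subseteq> SF \<delta>" for \<delta>
    proof
      fix z assume "z \<in> SG \<delta>"
      then obtain y where y: "y \<in> Bdelta \<Omega> \<delta> x" "y \<in> \<Omega>" "iv_mem z (g y)" unfolding SG_def by blast
      have "iv_mem z (f y)" using gs[OF y(2)] y(3) unfolding iv_mem_def by (meson order_trans)
      then show "z \<in> SF \<delta>" unfolding SF_def using y by blast
    qed
    have s2: "SD \<delta> \<subseteq> SG \<delta>" for \<delta>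
    proof
      fix z assume "z \<in> SD \<delta>"
      then obtain y where y: "y \<in> Bdelta \<Omega> \<delta> x" "y \<in> D0" "iv_mem z (f y)" unfolding SD_def by blast
      have yO: "y \<in> \<Omega>" using y D0O by blast
      have "fst (g y) \<le> snd (g y)" using g yO unfolding interval_fun_def by blast
      then have "iv_mem z (g y)" using gs[OF yO] deg[OF y(2)] y(3) unfolding iv_mem_def
        by (metis antisym order_trans)
      then show "z \<in> SG \<delta>" unfolding SG_def using y yO by blast
    qed
    have "Ilow \<Omega> \<Omega> f x \<le> Ilow \<Omega> \<Omega> g x"
      unfolding Ilow_def
      by (intro SUP_mono' Inf_superset_mono s1[unfolded SF_def SG_def])
    moreover have "Ilow \<Omega> \<Omega> g x \<le> Ilow D0 \<Omega> f x"
      unfolding Ilow_def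
      by (intro SUP_mono' Inf_superset_mono s2[unfolded SD_def SG_def])
    moreover have "Supp \<Omega> \<Omega> g x \<le> Supp \<Omega> \<Omega> f x"
      unfolding Supp_def
      by (intro INF_mono' Sup_subset_mono s1[unfolded SF_def SG_def])
    moreover have "Supp D0 \<Omega> f x \<le> Supp \<Omega> \<Omega> g x"
      unfolding Supp_def
      by (intro INF_mono' Sup_subset_mono s2[unfolded SD_def SG_def])
    ultimately have "Ilow \<Omega> \<Omega> g x = fst (f x)" "Supp \<Omega> \<Omega> g x = snd (f x)"
      using fO[OF x] fD[OF x] unfolding Fop_def prod_eq_iff fst_conv snd_conv
      by (metis order.antisym)+
    then show "Fop \<Omega> \<Omega> g x = f x" unfolding Fop_def by (simp add: prod_eq_iff)
  qed
qed

end
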